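(* Consider the networked feedback system described in the context, under the input assumption stated there, and let $d(k)=\sum_{i=0}^{\tau}\omega(k,k-i)u(k-i)$. Then for all integers $k_1,k_2\ge0$, $\mathbb E\{v(k_1)d(k_2)\}=0$.
   Context: Setting: $P$ is a SISO discrete-time LTI plant which is strictly proper (relative degree $\ge1$), $K$ a proper SISO LTI controller. Let $\tau\ge0$ be an integer, $\mathcal D=\{0,\dots,\tau\}$, and $\{\tau_n\}$ an i.i.d. sequence with values in $\mathcal D$, $\Pr\{\tau_n=i\}=p_i$, $\sum_ip_i=1$. With real weights $\alpha_0,\dots,\alpha_\tau$ and Kronecker delta $\delta$, the channel maps $u$ to $u_d(k)=\sum_{i=0}^{\tau}\alpha_i\delta(\tau_{k-i}-i)u(k-i)$. Closed loop: plant input $v-u_d$, plant output $y$, $u=Ky$; signals real, system at rest at $k=0$ (signals vanish for $k<0$). Define $\omega(k,n)=\alpha_{k-n}[\delta(\tau_n-(k-n))-p_{k-n}]$ if $n\le k\le n+\tau$ and $\omega(k,n)=0$ otherwise. Input assumption: $\{\tau_n\}$ is independent of $\{v(k)\}$, and $\{v(k)\}$ is zero-mean white noise (independent values) with bounded variances. *)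

theory Defs
  imports "HOL-Probability.Probability"
begin

definition mat_pow :: "real^'n^'n \<Rightarrow> nat \<Rightarrow> real^'n^'n" where
  "mat_pow A j = (((**) A) ^^ j) (mat 1)"

(* Impulse response of the SISO state-space system (A,B,C,D):
   h(0) = D, h(j) = C A^(j-1) B for j >= 1.  Zero initial state (system at rest). *)
definition ss_impulse :: "real^'n^'n \<Rightarrow> real^'n \<Rightarrow> real^'n \<Rightarrow> real \<Rightarrow> nat \<Rightarrow> real" where
  "ss_impulse A B C D j = (if j = 0 then D else C \<bullet> (mat_pow A (j - 1) *v B))"

definition kdelta :: "nat \<Rightarrow> nat \<Rightarrow> real" where
  "kdelta a b = (if a = b then 1 else 0)"

(* Channel output u_d(k) = sum_{i=0}^{tau} alpha_i delta(tau_{k-i} - i) u(k-i),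
   signals vanishing at negative times (so only i <= k contribute). *)
definition chan_out :: "nat \<Rightarrow> (nat \<Rightarrow> real) \<Rightarrow> (nat \<Rightarrow> 'a \<Rightarrow> nat) \<Rightarrow> (nat \<Rightarrow> 'a \<Rightarrow> real)
    \<Rightarrow> nat \<Rightarrow> 'a \<Rightarrow> real" where
  "chan_out T alpha tau u k w = (\<Sum>i\<in>{i. i \<le> T \<and> i \<le> k}. alpha i * kdelta (tau (k - i) w) i * u (k - i) w)"

definition omega_w :: "nat \<Rightarrow> (nat \<Rightarrow> real) \<Rightarrow> (nat \<Rightarrow> real) \<Rightarrow> (nat \<Rightarrow> 'a \<Rightarrow> nat)
    \<Rightarrow> nat \<Rightarrow> nat \<Rightarrow> 'a \<Rightarrow> real" where
  "omega_w T alpha p tau k n w =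
     (if n \<le> k \<and> k \<le> n + T then alpha (k - n) * (kdelta (tau n w) (k - n) - p (k - n)) else 0)"

definition d_sig :: "nat \<Rightarrow> (nat \<Rightarrow> real) \<Rightarrow> (nat \<Rightarrow> real) \<Rightarrow> (nat \<Rightarrow> 'a \<Rightarrow> nat)
    \<Rightarrow> (nat \<Rightarrow> 'a \<Rightarrow> real) \<Rightarrow> nat \<Rightarrow> 'a \<Rightarrow> real" where
  "d_sig T alpha p tau u k w = (\<Sum>i\<in>{i. i \<le> T \<and> i \<le> k}. omega_w T alpha p tau k (k - i) w * u (k - i) w)"

end

theory Submission
  imports Defs
begin


definition linb :: "'a set \<Rightarrow> (nat \<Rightarrow> 'a \<Rightarrow> real) \<Rightarrow> nat \<Rightarrow> ('a \<Rightarrow> real) \<Rightarrow> bool" where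
  "linb Om v n f \<longleftrightarrow> (\<exists>C. \<forall>w\<in>Om. \<bar>f w\<bar> \<le> C * (\<Sum>j<n. \<bar>v j w\<bar>))"

lemma linb_add:
  assumes "linb Om v n f" "linb Om v n g" shows "linb Om v n (\<lambda>w. f w + g w)"
proof -
  obtain C D where f: "\<forall>w\<in>Om. \<bar>f w\<bar> \<le> C * (\<Sum>j<n. \<bar>v j w\<bar>)"
    and g: "\<forall>w\<in>Om. \<bar>g w\<bar> \<le> D * (\<Sum>j<n. \<bar>v j w\<bar>)" using assms unfolding linb_def by blast
  have "\<forall>w\<in>Om. \<bar>f w + g w\<bar> \<le> (C + D) * (\<Sum>j<n. \<bar>v j w\<bar>)"
  proof
    fix w assume "w \<in> Om"
    then have "\<bar>f w\<bar> + \<bar>g w\<bar> \<le> (C + D) * (\<Sum>j<n. \<bar>v j w\<bar>)" using f g by (simp add: distrib_right add_mono)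
    then show "\<bar>f w + g w\<bar> \<le> (C + D) * (\<Sum>j<n. \<bar>v j w\<bar>)" by (meson abs_triangle_ineq order.trans)
  qed
  then show ?thesis unfolding linb_def by blast
qed

lemma linb_zero: "linb Om v n (\<lambda>w. 0)"
  unfolding linb_def by (rule exI[of _ 0]) auto

lemma linb_sum: "finite S \<Longrightarrow> (\<And>i. i\<in>S \<Longrightarrow> linb Om v n (f i)) \<Longrightarrow> linb Om v n (\<lambda>w. \<Sum>i\<in>S. f i w)"
proof (induction S rule: finite_induct)
  case empty then show ?case by (simp add: linb_zero)
next
  case (insert x F)
  then show ?case by (simp add: linb_add)
qed

lemma linb_mult:
  assumes g: "\<And>w. w\<in>Om \<Longrightarrow> \<bar>g w\<bar> \<le> B" and "linb Om v n f" shows "linb Om v n (\<lambda>w. g w * f w)"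
proof -
  obtain C where f: "\<forall>w\<in>Om. \<bar>f w\<bar> \<le> C * (\<Sum>j<n. \<bar>v j w\<bar>)" using assms unfolding linb_def by blast
  have "\<forall>w\<in>Om. \<bar>g w * f w\<bar> \<le> (B * C) * (\<Sum>j<n. \<bar>v j w\<bar>)"
  proof
    fix w assume w: "w \<in> Om"
    have B: "B \<ge> 0" using g[OF w] by linarith
    have "\<bar>g w * f w\<bar> = \<bar>g w\<bar> * \<bar>f w\<bar>" by (simp add: abs_mult)
    also have "\<dots> \<le> B * (C * (\<Sum>j<n. \<bar>v j w\<bar>))" using g[OF w] f w B by (intro mult_mono) auto
    finally show "\<bar>g w * f w\<bar> \<le> (B * C) * (\<Sum>j<n. \<bar>v j w\<bar>)" by (simp add: mult.assoc)
  qed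
  then show ?thesis unfolding linb_def by blast
qed

lemma linb_const: "linb Om v n f \<Longrightarrow> linb Om v n (\<lambda>w. c * f w)"
  using linb_mult[of Om "\<lambda>_. c" "\<bar>c\<bar>"] by auto

lemma linb_mono:
  assumes "m \<le> n" "linb Om v m f" shows "linb Om v n f"
proof -
  obtain C where f: "\<forall>w\<in>Om. \<bar>f w\<bar> \<le> C * (\<Sum>j<m. \<bar>v j w\<bar>)" using assms unfolding linb_def by blast
  have "\<forall>w\<in>Om. \<bar>f w\<bar> \<le> \<bar>C\<bar> * (\<Sum>j<n. \<bar>v j w\<bar>)"
  proof
    fix w assume w: "w \<in> Om"
    have "(\<Sum>j<m. \<bar>v j w\<bar>) \<le> (\<Sum>j<n. \<bar>v j w\<bar>)" using assms(1) by (intro sum_mono2) auto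
    moreover have "C * (\<Sum>j<m. \<bar>v j w\<bar>) \<le> \<bar>C\<bar> * (\<Sum>j<m. \<bar>v j w\<bar>)"
      by (intro mult_right_mono) (auto simp: sum_nonneg)
    ultimately show "\<bar>f w\<bar> \<le> \<bar>C\<bar> * (\<Sum>j<n. \<bar>v j w\<bar>)" using f w
      by (meson abs_ge_zero mult_left_mono order.trans)
  qed
  then show ?thesis unfolding linb_def by blast
qed

lemma linb_v: "j < n \<Longrightarrow> linb Om v n (v j)"
  unfolding linb_def by (rule exI[of _ 1]) (auto intro!: member_le_sum)

lemma linb_cong: "(\<And>w. w\<in>Om \<Longrightarrow> f w = g w) \<Longrightarrow> linb Om v n g \<Longrightarrow> linb Om v n f"
  unfolding linb_def by auto

context prob_space begin

lemma indep_set_sym: "indep_set A B \<Longrightarrow> indep_set B A"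
  unfolding indep_sets2_eq by (metis Int_commute mult.commute)

lemma sa_Int_stable: "sigma_algebra X S \<Longrightarrow> Int_stable S"
proof -
  assume "sigma_algebra X S"
  then interpret sigma_algebra X S .
  show ?thesis by (auto simp: Int_stable_def)
qed

lemma collect2:
  assumes "indep_sets E UNIV" "\<And>i. Int_stable (E i)" "K1 \<inter> K2 = {}"
  shows "indep_set (sigma_sets (space M) (\<Union>i\<in>K1. E i)) (sigma_sets (space M) (\<Union>i\<in>K2. E i))"
proof -
  have "indep_sets (\<lambda>j. sigma_sets (space M) (\<Union>i\<in>case_bool K1 K2 j. E i)) UNIV"
    apply (rule indep_sets_collect_sigma)
    using assms by (auto intro: indep_sets_mono_index simp: disjoint_family_on_def split: bool.split)
  then show ?thesis unfolding indep_set_def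
    by (rule indep_sets_mono_sets) (auto split: bool.split)
qed

lemma Lcomb:
  assumes i12: "indep_set A1 A2" and iAB: "indep_set A B" and sub: "A1 \<subseteq> A" "A2 \<subseteq> A"
    and cl: "\<And>x y. x\<in>A1 \<Longrightarrow> y\<in>A2 \<Longrightarrow> x\<inter>y \<in> A"
    and st: "Int_stable A1" "Int_stable A2" "Int_stable B"
  shows "indep_set (sigma_sets (space M) A1) (sigma_sets (space M) {a \<inter> b | a b. a \<in> A2 \<and> b \<in> B})"
proof (rule indep_set_sigma_sets)
  have ev1: "A1 \<subseteq> events" "A2 \<subseteq> events" using i12 by (auto dest: indep_setD_ev1 indep_setD_ev2)
  have evB: "B \<subseteq> events" using iAB by (auto dest: indep_setD_ev2)
  show "indep_set A1 {a \<inter> b | a b. a \<in> A2 \<and> b \<in> B}"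
  proof (rule indep_setI)
    show "A1 \<subseteq> events" by fact
    show "{a \<inter> b | a b. a \<in> A2 \<and> b \<in> B} \<subseteq> events" using ev1 evB by auto
    fix x y assume x: "x \<in> A1" and "y \<in> {a \<inter> b | a b. a \<in> A2 \<and> b \<in> B}"
    then obtain a b where y: "y = a \<inter> b" "a \<in> A2" "b \<in> B" by blast
    have "prob (x \<inter> y) = prob ((x \<inter> a) \<inter> b)" by (simp add: y Int_assoc)
    also have "\<dots> = prob (x \<inter> a) * prob b" using iAB cl[OF x y(2)] y(3) by (rule indep_setD)
    also have "\<dots> = prob x * prob a * prob b" using indep_setD[OF i12 x y(2)] by simp
    also have "prob y = prob a * prob b" using indep_setD[OF iAB _ y(3)] sub y by auto
    ultimately show "prob (x \<inter> y) = prob x * prob y" by simp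
  qed
  show "Int_stable A1" by fact
  show "Int_stable {a \<inter> b | a b. a \<in> A2 \<and> b \<in> B}"
    unfolding Int_stable_def
  proof (intro ballI)
    fix x y assume "x \<in> {a \<inter> b | a b. a \<in> A2 \<and> b \<in> B}" "y \<in> {a \<inter> b | a b. a \<in> A2 \<and> b \<in> B}"
    then obtain a b c d where "x = a \<inter> b" "a \<in> A2" "b \<in> B" "y = c \<inter> d" "c \<in> A2" "d \<in> B" by blast
    moreover have "a \<inter> c \<in> A2" "b \<inter> d \<in> B" using st calculation by (auto simp: Int_stable_def)
    ultimately show "x \<inter> y \<in> {a \<inter> b | a b. a \<in> A2 \<and> b \<in> B}"
      by (intro CollectI exI[of _ "a \<inter> c"] exI[of _ "b \<inter> d"]) auto
  qed
qed

lemma factor: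
  assumes ind: "indep_set (sigma_sets (space M) G1) (sigma_sets (space M) G2)"
    and X: "X \<in> borel_measurable M" and Y: "Y \<in> borel_measurable M"
    and XG: "\<And>s. s \<in> sets borel \<Longrightarrow> X -` s \<inter> space M \<in> sigma_sets (space M) G1"
    and YG: "\<And>s. s \<in> sets borel \<Longrightarrow> Y -` s \<inter> space M \<in> sigma_sets (space M) G2"
    and iX: "integrable M X" and iY: "integrable M (Y :: 'a \<Rightarrow> real)"
  shows "(\<integral>w. X w * Y w \<partial>M) = (\<integral>w. X w \<partial>M) * (\<integral>w. Y w \<partial>M)"
proof -
  have "indep_set (sigma_sets (space M) {X -` A \<inter> space M | A. A \<in> sets borel})
                  (sigma_sets (space M) {Y -` A \<inter> space M | A. A \<in> sets borel})"
    using ind unfolding indep_set_def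
    by (rule indep_sets_mono_sets) (auto split: bool.split intro!: sigma_sets_mono XG YG)
  then have "indep_var borel X borel Y" unfolding indep_var_eq using X Y by simp
  then show ?thesis using iX iY by (rule indep_var_lebesgue_integral)
qed

end


lemma linb_diff: "linb Om v n f \<Longrightarrow> linb Om v n g \<Longrightarrow> linb Om v n (\<lambda>w. f w - g w)"
  using linb_add[of Om v n f "\<lambda>w. (-1) * g w"] linb_const[of Om v n g "-1"] by simp

lemma linb_integrable:
  assumes M: "finite_measure M" and vm: "\<And>j. v j \<in> borel_measurable M"
    and vi: "\<And>j. integrable M (\<lambda>w. (v j w)\<^sup>2)"
    and l: "linb (space M) v n f" and fm: "f \<in> borel_measurable M"
  shows "integrable M f" "integrable M (\<lambda>w. v k w * f w)"
proof -
  interpret finite_measure M by fact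
  have iv: "integrable M (v j)" for j using vm vi by (rule square_integrable_imp_integrable)
  obtain C where C: "\<forall>w\<in>space M. \<bar>f w\<bar> \<le> C * (\<Sum>j<n. \<bar>v j w\<bar>)" using l unfolding linb_def by blast
  have C': "\<bar>f w\<bar> \<le> \<bar>C\<bar> * (\<Sum>j<n. \<bar>v j w\<bar>)" if "w \<in> space M" for w
  proof -
    have "C * (\<Sum>j<n. \<bar>v j w\<bar>) \<le> \<bar>C\<bar> * (\<Sum>j<n. \<bar>v j w\<bar>)"
      by (intro mult_right_mono) (auto simp: sum_nonneg)
    then show ?thesis using C that by fastforce
  qed
  show "integrable M f"
  proof (rule Bochner_Integration.integrable_bound[where f="\<lambda>w. \<bar>C\<bar> * (\<Sum>j<n. \<bar>v j w\<bar>)"])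
    show "integrable M (\<lambda>w. \<bar>C\<bar> * (\<Sum>j<n. \<bar>v j w\<bar>))" using iv by (intro Bochner_Integration.integrable_mult_right Bochner_Integration.integrable_sum Bochner_Integration.integrable_abs)
    show "AE x in M. norm (f x) \<le> norm (\<bar>C\<bar> * (\<Sum>j<n. \<bar>v j x\<bar>))"
      using C' by (intro AE_I2) (auto simp: sum_nonneg)
  qed fact
  show "integrable M (\<lambda>w. v k w * f w)"
  proof (rule Bochner_Integration.integrable_bound[where f="\<lambda>w. \<bar>C\<bar> * (\<Sum>j<n. (v k w)\<^sup>2 + (v j w)\<^sup>2)"])
    show "integrable M (\<lambda>w. \<bar>C\<bar> * (\<Sum>j<n. (v k w)\<^sup>2 + (v j w)\<^sup>2))" using vi by (intro Bochner_Integration.integrable_mult_right Bochner_Integration.integrable_sum Bochner_Integration.integrable_add)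
    show "(\<lambda>w. v k w * f w) \<in> borel_measurable M" using vm fm by auto
    show "AE x in M. norm (v k x * f x) \<le> norm (\<bar>C\<bar> * (\<Sum>j<n. (v k x)\<^sup>2 + (v j x)\<^sup>2))"
    proof (intro AE_I2)
      fix x assume x: "x \<in> space M"
      have ab: "\<bar>v k x\<bar> * \<bar>v j x\<bar> \<le> (v k x)\<^sup>2 + (v j x)\<^sup>2" for j
      proof -
        have "0 \<le> (\<bar>v k x\<bar> - \<bar>v j x\<bar>)\<^sup>2" by simp
        moreover have "(\<bar>v k x\<bar> - \<bar>v j x\<bar>)\<^sup>2 = (v k x)\<^sup>2 + (v j x)\<^sup>2 - 2 * (\<bar>v k x\<bar> * \<bar>v j x\<bar>)"
          by (simp add: power2_eq_square algebra_simps)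
        moreover have "0 \<le> \<bar>v k x\<bar> * \<bar>v j x\<bar>" by simp
        ultimately show ?thesis by linarith
      qed
      have "\<bar>v k x * f x\<bar> = \<bar>v k x\<bar> * \<bar>f x\<bar>" by (simp add: abs_mult)
      also have "\<dots> \<le> \<bar>v k x\<bar> * (\<bar>C\<bar> * (\<Sum>j<n. \<bar>v j x\<bar>))" using C'[OF x] by (intro mult_left_mono) auto
      also have "\<dots> = \<bar>C\<bar> * (\<Sum>j<n. \<bar>v k x\<bar> * \<bar>v j x\<bar>)" by (simp add: sum_distrib_left algebra_simps)
      also have "\<dots> \<le> \<bar>C\<bar> * (\<Sum>j<n. (v k x)\<^sup>2 + (v j x)\<^sup>2)"
        using ab by (intro mult_left_mono sum_mono) auto
      finally show "norm (v k x * f x) \<le> norm (\<bar>C\<bar> * (\<Sum>j<n. (v k x)\<^sup>2 + (v j x)\<^sup>2))"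
        by (simp add: sum_nonneg)
    qed
  qed
qed



lemma sa_vimage: "f \<in> X \<rightarrow> space N \<Longrightarrow> sigma_algebra X {f -` A \<inter> X | A. A \<in> sets N}"
  using sets.sigma_algebra_axioms[of "vimage_algebra X f N"] by (simp add: sets_vimage_algebra2)

lemma comp_in_Pi: "s \<in> sets (N j) \<Longrightarrow> (\<lambda>x. x j) -` s \<inter> space (Pi\<^sub>M UNIV N) \<in> sets (Pi\<^sub>M UNIV N)"
  using measurable_component_singleton[of j UNIV N] by (auto intro: measurable_sets)

lemma sig_pre: "f \<in> measurable (sigma Om E) N \<Longrightarrow> E \<subseteq> Pow Om \<Longrightarrow> s \<in> sets N \<Longrightarrow> f -` s \<inter> Om \<in> sigma_sets Om E"
  using measurable_sets[of f "sigma Om E" N s] by (simp add: sets_measure_of space_measure_of_conv)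

lemma meas_sigI: "(\<And>x. x\<in>Om \<Longrightarrow> f x \<in> space N) \<Longrightarrow> (\<And>s. s\<in>sets N \<Longrightarrow> f -` s \<inter> Om \<in> E) \<Longrightarrow> E \<subseteq> Pow Om
   \<Longrightarrow> f \<in> measurable (sigma Om E) N"
  by (rule measurableI) (auto simp: sets_measure_of space_measure_of_conv)

lemma meas_sub:
  assumes f: "f \<in> measurable (sigma Om E) N" and E: "E \<subseteq> Pow Om" and EE: "E \<subseteq> sigma_sets Om E2" and E2: "E2 \<subseteq> Pow Om"
  shows "f \<in> measurable (sigma Om E2) N"
proof (rule measurableI)
  fix x assume "x \<in> space (sigma Om E2)"
  then have "x \<in> space (sigma Om E)" by (simp add: space_measure_of_conv)
  then show "f x \<in> space N" by (rule measurable_space[OF f])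
next
  fix s assume s: "s \<in> sets N"
  have "f -` s \<inter> Om \<in> sigma_sets Om E" by (rule sig_pre[OF f E s])
  also have "\<dots> \<subseteq> sigma_sets Om E2" by (rule sigma_sets_mono[OF EE])
  finally show "f -` s \<inter> space (sigma Om E2) \<in> sets (sigma Om E2)"
    using E2 by (simp add: space_measure_of_conv)
qed



lemma lu_lemma:
  fixes tau :: "nat \<Rightarrow> 'a \<Rightarrow> nat" and v u y :: "nat \<Rightarrow> 'a \<Rightarrow> real"
  assumes plant: "\<And>k w. w \<in> Om \<Longrightarrow>
        y k w = (\<Sum>j<k. hP (k - j) * (v j w - chan_out T alpha tau u j w))"
    and controller: "\<And>k w. w \<in> Om \<Longrightarrow>
        u k w = (\<Sum>j\<le>k. hK (k - j) * y j w)"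
  shows "linb Om v n (u n)"
  proof (induction n rule: less_induct)
    case (less n)
    have ly: "linb Om v n (y k)" if "k \<le> n" for k
    proof -
      have "linb Om v n (\<lambda>w. \<Sum>j<k. hP (k - j) * (v j w - chan_out T alpha tau u j w))"
      proof (rule linb_sum)
        fix j assume j: "j \<in> {..<k}"
        have l1: "linb Om v n (v j)" using j that by (intro linb_v) auto
        have l2: "linb Om v n (\<lambda>w. alpha i * kdelta (tau (j - i) w) i * u (j - i) w)"
          if i: "i \<in> {i. i \<le> T \<and> i \<le> j}" for i
        proof (rule linb_mult[where B="\<bar>alpha i\<bar>"])
          show "\<bar>alpha i * kdelta (tau (j - i) w) i\<bar> \<le> \<bar>alpha i\<bar>" for w by (simp add: kdelta_def)
          have "j - i < n" using j i \<open>k \<le> n\<close> by auto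
          then have "linb Om v (j - i) (u (j - i))" by (rule less.IH)
          then show "linb Om v n (u (j - i))"
            by (rule linb_mono[rotated]) (use j i \<open>k \<le> n\<close> in auto)
        qed
        have l3: "linb Om v n (\<lambda>w. chan_out T alpha tau u j w)"
          unfolding chan_out_def by (rule linb_sum) (auto intro: l2)
        show "linb Om v n (\<lambda>w. hP (k - j) * (v j w - chan_out T alpha tau u j w))"
          by (rule linb_const, rule linb_diff[OF l1 l3])
      qed simp
      then show ?thesis by (rule linb_cong[rotated]) (simp add: plant)
    qed
    have "linb Om v n (\<lambda>w. \<Sum>j\<le>n. hK (n - j) * y j w)"
      by (rule linb_sum) (auto intro: linb_const ly)
    then show ?case by (rule linb_cong[rotated]) (simp add: controller)
  qed



lemma memG: "a \<in> A \<Longrightarrow> b \<in> B \<Longrightarrow> x = a \<inter> b \<Longrightarrow> x \<in> {a \<inter> b | a b. a \<in> A \<and> b \<in> B}"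
  by blast

theorem lemma6:
  fixes M :: "'a measure" and T :: nat and p alpha :: "nat \<Rightarrow> real"
    and tau :: "nat \<Rightarrow> 'a \<Rightarrow> nat" and v u y :: "nat \<Rightarrow> 'a \<Rightarrow> real"
    and AP :: "real^'n^'n" and BP CP :: "real^'n"
    and AK :: "real^'m^'m" and BK CK :: "real^'m" and DK :: real
  assumes M: "prob_space M"
    and tau_meas: "\<And>n. tau n \<in> measurable M (count_space UNIV)"
    and tau_range: "\<And>n w. w \<in> space M \<Longrightarrow> tau n w \<le> T"
    and tau_dist: "\<And>n i. measure M {w \<in> space M. tau n w = i} = p i"
    and p_sum: "(\<Sum>i\<le>T. p i) = 1"
    and tau_indep: "prob_space.indep_vars M (\<lambda>_. count_space UNIV) tau UNIV"
    and v_meas: "\<And>k. v k \<in> borel_measurable M"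
    and v_indep: "prob_space.indep_vars M (\<lambda>_. borel) v UNIV"
    and v_mean: "\<And>k. integral\<^sup>L M (v k) = 0"
    and v_var: "\<exists>B. \<forall>k. integrable M (\<lambda>w. (v k w)\<^sup>2) \<and> prob_space.variance M (v k) \<le> B"
    and tau_v_indep: "prob_space.indep_set M
        {(\<lambda>w n. tau n w) -` S \<inter> space M | S. S \<in> sets (Pi\<^sub>M UNIV (\<lambda>_. count_space (UNIV :: nat set)))}
        {(\<lambda>w k. v k w) -` S \<inter> space M | S. S \<in> sets (Pi\<^sub>M UNIV (\<lambda>_. (borel :: real measure)))}"
    and plant: "\<And>k w. w \<in> space M \<Longrightarrow>
        y k w = (\<Sum>j<k. ss_impulse AP BP CP 0 (k - j) * (v j w - chan_out T alpha tau u j w))"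
    and controller: "\<And>k w. w \<in> space M \<Longrightarrow>
        u k w = (\<Sum>j\<le>k. ss_impulse AK BK CK DK (k - j) * y j w)"
  shows "integral\<^sup>L M (\<lambda>w. v k1 w * d_sig T alpha p tau u k2 w) = 0"
proof -
  interpret prob_space M by (rule M)
  define VS where "VS = (\<lambda>i. {v i -` A \<inter> space M | A. A \<in> sets (borel::real measure)})"
  define TS where "TS = (\<lambda>i. {tau i -` A \<inter> space M | A. A \<in> sets (count_space (UNIV::nat set))})"
  define TAU where "TAU = {(\<lambda>w n. tau n w) -` S \<inter> space M | S. S \<in> sets (Pi\<^sub>M UNIV (\<lambda>_. count_space (UNIV :: nat set)))}"
  define V where "V = {(\<lambda>w k. v k w) -` S \<inter> space M | S. S \<in> sets (Pi\<^sub>M UNIV (\<lambda>_. (borel :: real measure)))}"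
  define Gen where "Gen = (\<lambda>N. \<Union>m<N. VS m \<union> TS m)"
  have iVS: "indep_sets VS UNIV" using v_indep unfolding indep_vars_def2 VS_def by simp
  have iTS: "indep_sets TS UNIV" using tau_indep unfolding indep_vars_def2 TS_def by simp
  have iTV: "indep_set TAU V" using tau_v_indep unfolding TAU_def V_def .
  have stVS: "Int_stable (VS i)" for i
    unfolding Int_stable_def VS_def
  proof (intro ballI)
    fix a b assume "a \<in> {v i -` A \<inter> space M |A. A \<in> sets (borel::real measure)}" "b \<in> {v i -` A \<inter> space M |A. A \<in> sets (borel::real measure)}"
    then obtain A B where "a = v i -` A \<inter> space M" "A \<in> sets borel" "b = v i -` B \<inter> space M" "B \<in> sets borel" by blast
    then show "a \<inter> b \<in> {v i -` A \<inter> space M |A. A \<in> sets (borel::real measure)}" by (intro CollectI exI[of _ "A \<inter> B"]) auto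
  qed
  have stTS: "Int_stable (TS i)" for i
    unfolding Int_stable_def TS_def
  proof (intro ballI)
    fix a b assume "a \<in> {tau i -` A \<inter> space M |A. A \<in> sets (count_space (UNIV::nat set))}" "b \<in> {tau i -` A \<inter> space M |A. A \<in> sets (count_space (UNIV::nat set))}"
    then obtain A B where "a = tau i -` A \<inter> space M" "b = tau i -` B \<inter> space M" by blast
    then show "a \<inter> b \<in> {tau i -` A \<inter> space M |A. A \<in> sets (count_space (UNIV::nat set))}" by (intro CollectI exI[of _ "A \<inter> B"]) auto
  qed
  have VSpow: "VS i \<subseteq> Pow (space M)" for i unfolding VS_def by auto
  have TSpow: "TS i \<subseteq> Pow (space M)" for i unfolding TS_def by auto
  have GenPow: "Gen N \<subseteq> Pow (space M)" for N unfolding Gen_def using VSpow TSpow by blast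
  have saV: "sigma_algebra (space M) V" unfolding V_def by (rule sa_vimage) (auto simp: space_PiM)
  have saT: "sigma_algebra (space M) TAU" unfolding TAU_def by (rule sa_vimage) (auto simp: space_PiM)
  have VSV: "VS j \<subseteq> V" for j
  proof
    fix a assume "a \<in> VS j"
    then obtain A where a: "a = v j -` A \<inter> space M" "A \<in> sets borel" unfolding VS_def by blast
    have "(\<lambda>x. x j) -` A \<inter> space (Pi\<^sub>M UNIV (\<lambda>_. borel)) \<in> sets (Pi\<^sub>M UNIV (\<lambda>_. (borel::real measure)))"
      using comp_in_Pi[of A "\<lambda>_. borel" j] a by simp
    moreover have "a = (\<lambda>w k. v k w) -` ((\<lambda>x. x j) -` A \<inter> space (Pi\<^sub>M UNIV (\<lambda>_. (borel::real measure)))) \<inter> space M"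
      using a by (auto simp: space_PiM)
    ultimately show "a \<in> V" unfolding V_def by blast
  qed
  have TST: "TS j \<subseteq> TAU" for j
  proof
    fix a assume "a \<in> TS j"
    then obtain A where a: "a = tau j -` A \<inter> space M" unfolding TS_def by blast
    have "(\<lambda>x. x j) -` A \<inter> space (Pi\<^sub>M UNIV (\<lambda>_. count_space UNIV)) \<in> sets (Pi\<^sub>M UNIV (\<lambda>_. count_space (UNIV::nat set)))"
      using comp_in_Pi[of A "\<lambda>_. count_space UNIV" j] a by simp
    moreover have "a = (\<lambda>w k. tau k w) -` ((\<lambda>x. x j) -` A \<inter> space (Pi\<^sub>M UNIV (\<lambda>_. count_space (UNIV::nat set)))) \<inter> space M"
      using a by (auto simp: space_PiM)
    ultimately show "a \<in> TAU" unfolding TAU_def by blast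
  qed
  have OmV: "space M \<in> V"
  proof - interpret sigma_algebra "space M" V by (rule saV) show ?thesis by (rule top) qed
  have OmT: "space M \<in> TAU"
  proof - interpret sigma_algebra "space M" TAU by (rule saT) show ?thesis by (rule top) qed
  have stV: "Int_stable V" by (rule sa_Int_stable[OF saV])
  have stT: "Int_stable TAU" by (rule sa_Int_stable[OF saT])
  have VSev: "VS i \<subseteq> sets M" for i unfolding VS_def using v_meas by (auto intro: measurable_sets)
  have TSev: "TS i \<subseteq> sets M" for i unfolding TS_def using tau_meas by (auto intro: measurable_sets)
  have Genev: "Gen N \<subseteq> sets M" for N unfolding Gen_def using VSev TSev by blast
  have subalg: "subalgebra M (sigma (space M) (Gen N))" for N
    unfolding subalgebra_def using GenPow[of N] Genev[of N]
    by (simp add: sets_measure_of space_measure_of_conv sets.sigma_sets_subset)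

  have mv: "v j \<in> borel_measurable (sigma (space M) (Gen N))" if "j < N" for j N
  proof (rule meas_sigI[OF _ _ GenPow])
    fix s :: "real set" assume "s \<in> sets borel"
    then have "v j -` s \<inter> space M \<in> VS j" unfolding VS_def by blast
    then show "v j -` s \<inter> space M \<in> Gen N" unfolding Gen_def using that by blast
  qed simp
  have mt: "tau m \<in> measurable (sigma (space M) (Gen N)) (count_space UNIV)" if "m < N" for m N
  proof (rule meas_sigI[OF _ _ GenPow])
    fix s :: "nat set" assume "s \<in> sets (count_space UNIV)"
    then have "tau m -` s \<inter> space M \<in> TS m" unfolding TS_def by blast
    then show "tau m -` s \<inter> space M \<in> Gen N" unfolding Gen_def using that by blast
  qed simp
  have mk: "(\<lambda>w. kdelta (tau m w) i) \<in> borel_measurable (sigma (space M) (Gen N))" if "m < N" for m N i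
    using measurable_compose[OF mt[OF that] borel_measurable_count_space] .
  have mu: "u n \<in> borel_measurable (sigma (space M) (Gen N))" if "n \<le> N" for n N
    using that
  proof (induction n rule: less_induct)
    case (less n)
    let ?MS = "sigma (space M) (Gen N)"
    have sp: "space ?MS = space M" by (simp add: space_measure_of_conv)
    have my: "y k \<in> borel_measurable ?MS" if "k \<le> n" for k
    proof -
      have "(\<lambda>w. \<Sum>j<k. ss_impulse AP BP CP 0 (k - j) * (v j w - chan_out T alpha tau u j w)) \<in> borel_measurable ?MS"
        unfolding chan_out_def
        using that less
        by (auto intro!: borel_measurable_sum borel_measurable_times borel_measurable_diff mv mk less.IH)
      moreover have "y k \<in> borel_measurable ?MS \<longleftrightarrow> (\<lambda>w. \<Sum>j<k. ss_impulse AP BP CP 0 (k - j) * (v j w - chan_out T alpha tau u j w)) \<in> borel_measurable ?MS"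
        by (rule measurable_cong) (simp add: sp plant)
      ultimately show ?thesis by simp
    qed
    have "(\<lambda>w. \<Sum>j\<le>n. ss_impulse AK BK CK DK (n - j) * y j w) \<in> borel_measurable ?MS"
      by (auto intro!: borel_measurable_sum borel_measurable_times my)
    moreover have "u n \<in> borel_measurable ?MS \<longleftrightarrow> (\<lambda>w. \<Sum>j\<le>n. ss_impulse AK BK CK DK (n - j) * y j w) \<in> borel_measurable ?MS"
      by (rule measurable_cong) (simp add: sp controller)
    ultimately show ?case by simp
  qed
  have lu: "linb (space M) v n (u n)" for n
    by (rule lu_lemma[OF plant controller])
  have umeas: "u n \<in> borel_measurable M" for n by (rule measurable_from_subalg[OF subalg mu[of n n]]) simp
  obtain Bv where Bv: "\<forall>k. integrable M (\<lambda>w. (v k w)\<^sup>2) \<and> prob_space.variance M (v k) \<le> Bv" using v_var by blast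
  have ivv: "integrable M (\<lambda>w. (v j w)\<^sup>2)" for j using Bv by blast
  have iv: "integrable M (v j)" for j using v_meas ivv by (rule square_integrable_imp_integrable)
  have fm: "finite_measure M" by unfold_locales

  have tm: "integrable M (\<lambda>w. v k1 w * (alpha i * (kdelta (tau n w) i - p i) * u n w)) \<and>
      (\<integral>w. v k1 w * (alpha i * (kdelta (tau n w) i - p i) * u n w) \<partial>M) = 0" for n i
  proof -
    define om where "om = (\<lambda>w. alpha i * (kdelta (tau n w) i - p i))"
    have omb: "\<bar>om w\<bar> \<le> \<bar>alpha i\<bar> * (1 + \<bar>p i\<bar>)" for w
      unfolding om_def abs_mult by (intro mult_left_mono) (auto simp: kdelta_def)
    have kdm: "(\<lambda>w. kdelta (tau n w) i) \<in> borel_measurable M"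
      using measurable_compose[OF tau_meas borel_measurable_count_space] .
    have omm: "om \<in> borel_measurable M" unfolding om_def
      by (intro borel_measurable_times borel_measurable_const borel_measurable_diff kdm)
    have lW: "linb (space M) v n (\<lambda>w. om w * u n w)" using omb lu by (rule linb_mult)
    have mW: "(\<lambda>w. om w * u n w) \<in> borel_measurable M" by (intro borel_measurable_times omm umeas)
    have iW: "integrable M (\<lambda>w. om w * u n w)" by (rule linb_integrable(1)[OF fm v_meas ivv lW mW])
    have iT: "integrable M (\<lambda>w. v k1 w * (om w * u n w))" by (rule linb_integrable(2)[OF fm v_meas ivv lW mW])
    have "(\<integral>w. v k1 w * (om w * u n w) \<partial>M) = 0"
    proof (cases "n \<le> k1")
      case True
      define A1 where "A1 = sigma_sets (space M) (\<Union>i\<in>{k1}. VS i)"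
      define A2 where "A2 = sigma_sets (space M) (\<Union>i\<in>{..<n}. VS i)"
      have i12: "indep_set A1 A2" unfolding A1_def A2_def
        by (rule collect2[OF iVS stVS]) (use True in auto)
      have A1V: "A1 \<subseteq> V" unfolding A1_def using VSV by (intro sigma_algebra.sigma_sets_subset[OF saV]) blast
      have A2V: "A2 \<subseteq> V" unfolding A2_def using VSV by (intro sigma_algebra.sigma_sets_subset[OF saV]) blast
      have A2pow: "A2 \<subseteq> Pow (space M)"
      proof
        fix x assume "x \<in> A2"
        moreover have "(\<Union>i\<in>{..<n}. VS i) \<subseteq> Pow (space M)" using VSpow by blast
        ultimately show "x \<in> Pow (space M)" unfolding A2_def using sigma_sets_into_sp by blast
      qed
      have OmA2: "space M \<in> A2" unfolding A2_def by (rule sigma_sets_top)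
      define G1 where "G1 = {a \<inter> b | a b. a \<in> A2 \<and> b \<in> TAU}"
      have ind: "indep_set (sigma_sets (space M) A1) (sigma_sets (space M) G1)"
        unfolding G1_def
      proof (rule Lcomb[OF i12 indep_set_sym[OF iTV] A1V A2V])
        show "x \<inter> y \<in> V" if "x \<in> A1" "y \<in> A2" for x y
          using stV A1V A2V that unfolding Int_stable_def by blast
        show "Int_stable A1" unfolding A1_def using VSpow
          by (intro sa_Int_stable[OF sigma_algebra_sigma_sets]) blast
        show "Int_stable A2" unfolding A2_def using VSpow
          by (intro sa_Int_stable[OF sigma_algebra_sigma_sets]) blast
      qed (rule stT)
      have G1pow: "G1 \<subseteq> Pow (space M)" unfolding G1_def using A2pow by blast
      have tG: "tau n \<in> measurable (sigma (space M) G1) (count_space UNIV)"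
      proof (rule meas_sigI[OF _ _ G1pow])
        fix s :: "nat set" assume "s \<in> sets (count_space UNIV)"
        then have "tau n -` s \<inter> space M \<in> TAU" using TST[of n] unfolding TS_def by blast
        then have "space M \<inter> (tau n -` s \<inter> space M) \<in> G1" unfolding G1_def by (rule memG[OF OmA2 _ refl])
        then show "tau n -` s \<inter> space M \<in> G1" by (simp add: Int_absorb1)
      qed simp
      have GG: "Gen n \<subseteq> sigma_sets (space M) G1"
      proof
        fix x assume "x \<in> Gen n"
        then obtain m where m: "m < n" "x \<in> VS m \<or> x \<in> TS m" unfolding Gen_def by blast
        have "x \<in> G1"
        proof (cases "x \<in> VS m")
          case True
          then have "x \<in> A2" unfolding A2_def using m(1) by (auto intro: sigma_sets.Basic)
          moreover have "x = x \<inter> space M" using True VSpow by blast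
          ultimately show ?thesis unfolding G1_def by (rule memG[OF _ OmT])
        next
          case False
          then have "x \<in> TAU" using m TST by blast
          moreover have "x = space M \<inter> x" using False m TSpow by blast
          ultimately show ?thesis unfolding G1_def by (rule memG[OF OmA2])
        qed
        then show "x \<in> sigma_sets (space M) G1" by (rule sigma_sets.Basic)
      qed
      have uG: "u n \<in> borel_measurable (sigma (space M) G1)"
        by (rule meas_sub[OF mu[of n n] GenPow GG G1pow]) simp
      have omG: "om \<in> borel_measurable (sigma (space M) G1)"
        unfolding om_def
        by (intro borel_measurable_times borel_measurable_const borel_measurable_diff measurable_compose[OF tG borel_measurable_count_space])
      have WG: "(\<lambda>w. om w * u n w) \<in> borel_measurable (sigma (space M) G1)" by (intro borel_measurable_times omG uG)
      have "(\<integral>w. v k1 w * (om w * u n w) \<partial>M) = (\<integral>w. v k1 w \<partial>M) * (\<integral>w. om w * u n w \<partial>M)"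
      proof (rule factor[OF ind v_meas mW _ _ iv iW])
        fix s :: "real set" assume "s \<in> sets borel"
        then have "v k1 -` s \<inter> space M \<in> VS k1" unfolding VS_def by blast
        then have "v k1 -` s \<inter> space M \<in> A1" unfolding A1_def by (auto intro: sigma_sets.Basic)
        then show "v k1 -` s \<inter> space M \<in> sigma_sets (space M) A1" by (rule sigma_sets.Basic)
      next
        fix s :: "real set" assume "s \<in> sets borel"
        then show "(\<lambda>w. om w * u n w) -` s \<inter> space M \<in> sigma_sets (space M) G1"
          by (rule sig_pre[OF WG G1pow])
      qed
      then show ?thesis using v_mean by simp
    next
      case False
      define A1 where "A1 = sigma_sets (space M) (\<Union>i\<in>{n}. TS i)"
      define A2 where "A2 = sigma_sets (space M) (\<Union>i\<in>{..<n}. TS i)"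
      have i12: "indep_set A1 A2" unfolding A1_def A2_def
        by (rule collect2[OF iTS stTS]) auto
      have A1T: "A1 \<subseteq> TAU" unfolding A1_def using TST by (intro sigma_algebra.sigma_sets_subset[OF saT]) blast
      have A2T: "A2 \<subseteq> TAU" unfolding A2_def using TST by (intro sigma_algebra.sigma_sets_subset[OF saT]) blast
      have A2pow: "A2 \<subseteq> Pow (space M)"
      proof
        fix x assume "x \<in> A2"
        moreover have "(\<Union>i\<in>{..<n}. TS i) \<subseteq> Pow (space M)" using TSpow by blast
        ultimately show "x \<in> Pow (space M)" unfolding A2_def using sigma_sets_into_sp by blast
      qed
      have OmA2: "space M \<in> A2" unfolding A2_def by (rule sigma_sets_top)
      define G2 where "G2 = {a \<inter> b | a b. a \<in> A2 \<and> b \<in> V}"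
      have ind: "indep_set (sigma_sets (space M) A1) (sigma_sets (space M) G2)"
        unfolding G2_def
      proof (rule Lcomb[OF i12 iTV A1T A2T])
        show "x \<inter> y \<in> TAU" if "x \<in> A1" "y \<in> A2" for x y
          using stT A1T A2T that unfolding Int_stable_def by blast
        show "Int_stable A1" unfolding A1_def using TSpow
          by (intro sa_Int_stable[OF sigma_algebra_sigma_sets]) blast
        show "Int_stable A2" unfolding A2_def using TSpow
          by (intro sa_Int_stable[OF sigma_algebra_sigma_sets]) blast
      qed (rule stV)
      have G2pow: "G2 \<subseteq> Pow (space M)" unfolding G2_def using A2pow by blast
      have vG: "v k1 \<in> borel_measurable (sigma (space M) G2)"
      proof (rule meas_sigI[OF _ _ G2pow])
        fix s :: "real set" assume "s \<in> sets borel"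
        then have "v k1 -` s \<inter> space M \<in> V" using VSV[of k1] unfolding VS_def by blast
        then have "space M \<inter> (v k1 -` s \<inter> space M) \<in> G2" unfolding G2_def by (rule memG[OF OmA2 _ refl])
        then show "v k1 -` s \<inter> space M \<in> G2" by (simp add: Int_absorb1)
      qed simp
      have GG: "Gen n \<subseteq> sigma_sets (space M) G2"
      proof
        fix x assume "x \<in> Gen n"
        then obtain m where m: "m < n" "x \<in> VS m \<or> x \<in> TS m" unfolding Gen_def by blast
        have "x \<in> G2"
        proof (cases "x \<in> TS m")
          case True
          then have "x \<in> A2" unfolding A2_def using m(1) by (auto intro: sigma_sets.Basic)
          moreover have "x = x \<inter> space M" using True TSpow by blast
          ultimately show ?thesis unfolding G2_def by (rule memG[OF _ OmV])
        next
          case False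
          then have "x \<in> V" using m VSV by blast
          moreover have "x = space M \<inter> x" using False m VSpow by blast
          ultimately show ?thesis unfolding G2_def by (rule memG[OF OmA2])
        qed
        then show "x \<in> sigma_sets (space M) G2" by (rule sigma_sets.Basic)
      qed
      have uG: "u n \<in> borel_measurable (sigma (space M) G2)"
        by (rule meas_sub[OF mu[of n n] GenPow GG G2pow]) simp
      have YG: "(\<lambda>w. v k1 w * u n w) \<in> borel_measurable (sigma (space M) G2)" by (intro borel_measurable_times vG uG)
      have lY: "linb (space M) v n (u n)" by (rule lu)
      have iY: "integrable M (\<lambda>w. v k1 w * u n w)" by (rule linb_integrable(2)[OF fm v_meas ivv lY umeas])
      have aeom: "AE x in M. norm (om x) \<le> \<bar>alpha i\<bar> * (1 + \<bar>p i\<bar>)"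
        by (rule AE_I2) (simp add: omb)
      have iom: "integrable M om"
        by (rule finite_measure.integrable_const_bound[OF fm aeom omm])
      have kd: "(\<integral>w. kdelta (tau n w) i \<partial>M) = p i"
      proof -
        have "(\<integral>w. kdelta (tau n w) i \<partial>M) = (\<integral>w. indicator {w\<in>space M. tau n w = i} w \<partial>M)"
          by (rule Bochner_Integration.integral_cong) (auto simp: kdelta_def indicator_def)
        also have "\<dots> = measure M ({w\<in>space M. tau n w = i} \<inter> space M)"
          by simp
        also have "{w\<in>space M. tau n w = i} \<inter> space M = {w\<in>space M. tau n w = i}" by blast
        finally show ?thesis using tau_dist by simp
      qed
      have aekd: "AE x in M. norm (kdelta (tau n x) i) \<le> 1"
        by (rule AE_I2) (simp add: kdelta_def)
      have ikd: "integrable M (\<lambda>w. kdelta (tau n w) i)"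
        by (rule finite_measure.integrable_const_bound[OF fm aekd kdm])
      have Eom: "(\<integral>w. om w \<partial>M) = 0"
      proof -
        have "(\<integral>w. om w \<partial>M) = alpha i * (\<integral>w. kdelta (tau n w) i - p i \<partial>M)"
          unfolding om_def by (rule integral_mult_right_zero)
        also have "(\<integral>w. kdelta (tau n w) i - p i \<partial>M) = (\<integral>w. kdelta (tau n w) i \<partial>M) - (\<integral>w. p i \<partial>M)"
          by (rule Bochner_Integration.integral_diff[OF ikd]) simp
        also have "(\<integral>w. p i \<partial>M) = p i" by (simp add: prob_space)
        finally show ?thesis using kd by simp
      qed
      have "(\<integral>w. v k1 w * (om w * u n w) \<partial>M) = (\<integral>w. om w * (v k1 w * u n w) \<partial>M)"
        by (rule Bochner_Integration.integral_cong[OF refl]) (simp add: mult.left_commute)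
      also have "\<dots> = (\<integral>w. om w \<partial>M) * (\<integral>w. v k1 w * u n w \<partial>M)"
      proof (rule factor[OF ind omm _ _ _ iom iY])
        show "(\<lambda>w. v k1 w * u n w) \<in> borel_measurable M" by (intro borel_measurable_times v_meas umeas)
        fix s :: "real set" assume "s \<in> sets borel"
        have "om -` s \<inter> space M = tau n -` ((\<lambda>x. alpha i * (kdelta x i - p i)) -` s) \<inter> space M"
          unfolding om_def by auto
        moreover have "tau n -` ((\<lambda>x. alpha i * (kdelta x i - p i)) -` s) \<inter> space M \<in> TS n"
          unfolding TS_def by (intro CollectI exI[of _ "(\<lambda>x. alpha i * (kdelta x i - p i)) -` s"]) simp
        moreover have "TS n \<subseteq> A1" unfolding A1_def by (auto intro: sigma_sets.Basic)
        ultimately have "om -` s \<inter> space M \<in> A1" by auto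
        then show "om -` s \<inter> space M \<in> sigma_sets (space M) A1" by (rule sigma_sets.Basic)
      next
        fix s :: "real set" assume "s \<in> sets borel"
        then show "(\<lambda>w. v k1 w * u n w) -` s \<inter> space M \<in> sigma_sets (space M) G2"
          by (rule sig_pre[OF YG G2pow])
      qed
      finally show ?thesis using Eom by simp
    qed
    then show ?thesis using iT unfolding om_def by simp
  qed
  have eq: "(\<lambda>w. v k1 w * d_sig T alpha p tau u k2 w) =
    (\<lambda>w. \<Sum>i\<in>{i. i \<le> T \<and> i \<le> k2}. v k1 w * (alpha i * (kdelta (tau (k2 - i) w) i - p i) * u (k2 - i) w))"
    unfolding d_sig_def sum_distrib_left by (intro ext sum.cong refl) (auto simp: omega_w_def)
  have "(\<integral>w. v k1 w * d_sig T alpha p tau u k2 w \<partial>M) =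
    (\<Sum>i\<in>{i. i \<le> T \<and> i \<le> k2}. (\<integral>w. v k1 w * (alpha i * (kdelta (tau (k2 - i) w) i - p i) * u (k2 - i) w) \<partial>M))"
    unfolding eq using tm by (intro Bochner_Integration.integral_sum) blast
  also have "\<dots> = 0" using tm by simp
  finally show ?thesis .
qed


end
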